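(* In the size-cost migration model, every randomized online algorithm for non-clairvoyant dynamic bin packing whose expected total migrated size is $o(\text{total size})$ has competitive ratio at least $\frac{\mu}{6}$, where $\mu$ is the ratio of the longest to the shortest item duration.
   Context: Dynamic bin packing: bins have capacity $1$; items arrive online at times $a_i\ge0$ with size $s_i\in[0,1]$ and duration $d_i>0$ (only the size is revealed at arrival), present during $[a_i,a_i+d_i)$. Each item is placed on arrival into an open bin with enough remaining capacity or a new bin; a migration moves an already placed item to another bin. In the size-cost model, migrating item $i$ once costs $s_i$, and the migrated size is the sum of these costs; the total size of an instance is $\sum_i s_i$. Cost = total active time $\int_0^\infty(\text{number of nonempty bins at } t)\,dt$; $\mathrm{OPT}(I)=\int_0^\infty\mathrm{OPT}_t\,dt$ with $\mathrm{OPT}_t$ the minimum number of unit bins to pack the items present at time $t$. Competitive ratio at least $\gamma$: for every $\beta<\gamma$ some instance has expected cost $>\beta\,\mathrm{OPT}$. *)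

theory Defs
  imports "HOL-Probability.Probability" "HOL-Library.Landau_Symbols"
begin

text \<open>An item is a triple (arrival time, size, duration). An instance is the list of items
  in their (online) arrival order.\<close>
type_synonym item = "real \<times> real \<times> real"

definition arr :: "item \<Rightarrow> real" where "arr it = fst it"
definition sz :: "item \<Rightarrow> real" where "sz it = fst (snd it)"
definition dur :: "item \<Rightarrow> real" where "dur it = snd (snd it)"

definition valid_instance :: "item list \<Rightarrow> bool" where
  "valid_instance I \<longleftrightarrow> sorted (map arr I) \<and>
     (\<forall>it\<in>set I. 0 \<le> arr it \<and> 0 \<le> sz it \<and> sz it \<le> 1 \<and> 0 < dur it)"

definition present :: "item list \<Rightarrow> real \<Rightarrow> nat set" where
  "present I t = {i. i < length I \<and> arr (I!i) \<le> t \<and> t < arr (I!i) + dur (I!i)}"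

text \<open>What a non-clairvoyant online algorithm has observed at time t: the items that have
  arrived so far (in order), with arrival time and size, and the departure time of those
  that have already departed.\<close>
definition view :: "item list \<Rightarrow> real \<Rightarrow> (real \<times> real \<times> real option) list" where
  "view I t = map (\<lambda>it. (arr it, sz it,
        if arr it + dur it \<le> t then Some (arr it + dur it) else None))
      (filter (\<lambda>it. arr it \<le> t) I)"

text \<open>A schedule assigns at every time t to every item index a bin label.\<close>
type_synonym schedule = "real \<Rightarrow> nat \<Rightarrow> nat"

text \<open>A deterministic algorithm maps an instance to a schedule; it is online and
  non-clairvoyant if its decisions at time t depend only on the view at time t.\<close>
definition online_nc :: "(item list \<Rightarrow> schedule) \<Rightarrow> bool" where
  "online_nc A \<longleftrightarrow> (\<forall>I J t. valid_instance I \<and> valid_instance J \<and> view I t = view J t \<longrightarrow>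
       (\<forall>i < length (view I t). A I t i = A J t i))"

definition feasible :: "item list \<Rightarrow> schedule \<Rightarrow> bool" where
  "feasible I x \<longleftrightarrow> (\<forall>t b. (\<Sum>i\<in>{i\<in>present I t. x t i = b}. sz (I!i)) \<le> 1)"

definition nbins :: "item list \<Rightarrow> schedule \<Rightarrow> real \<Rightarrow> nat" where
  "nbins I x t = card (x t ` present I t)"

definition cost :: "item list \<Rightarrow> schedule \<Rightarrow> ennreal" where
  "cost I x = (\<integral>\<^sup>+ t. ennreal (real (nbins I x t)) \<partial>lborel)"

text \<open>Number of migrations of item i: number of bin changes during its presence.\<close>
definition migrations :: "item list \<Rightarrow> schedule \<Rightarrow> nat \<Rightarrow> ennreal" where
  "migrations I x i = (SUP ts\<in>{ts. sorted ts \<and> set ts \<subseteq> {arr (I!i)..<arr (I!i) + dur (I!i)}}.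
       ennreal (real (card {j. Suc j < length ts \<and> x (ts!j) i \<noteq> x (ts!Suc j) i})))"

text \<open>Size-cost model: each migration of item i costs s_i.\<close>
definition migrated_size :: "item list \<Rightarrow> schedule \<Rightarrow> ennreal" where
  "migrated_size I x = (\<Sum>i<length I. ennreal (sz (I!i)) * migrations I x i)"

definition total_size :: "item list \<Rightarrow> real" where
  "total_size I = sum_list (map sz I)"

definition opt_at :: "item list \<Rightarrow> real \<Rightarrow> nat" where
  "opt_at I t = (LEAST k. \<exists>f::nat \<Rightarrow> nat. (\<forall>i\<in>present I t. f i < k) \<and>
       (\<forall>b. (\<Sum>i\<in>{i\<in>present I t. f i = b}. sz (I!i)) \<le> 1))"

definition OPT :: "item list \<Rightarrow> ennreal" where
  "OPT I = (\<integral>\<^sup>+ t. ennreal (real (opt_at I t)) \<partial>lborel)"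

definition duration_ratio :: "item list \<Rightarrow> real" where
  "duration_ratio I = Max (dur ` set I) / Min (dur ` set I)"

text \<open>A randomized algorithm: random seed from a probability space M; for each seed a
  deterministic online non-clairvoyant feasible algorithm (oblivious adversary).\<close>
definition randomized_algorithm :: "'r measure \<Rightarrow> ('r \<Rightarrow> item list \<Rightarrow> schedule) \<Rightarrow> bool" where
  "randomized_algorithm M A \<longleftrightarrow> prob_space M \<and>
     (\<forall>\<omega>\<in>space M. online_nc (A \<omega>) \<and>
        (\<forall>I. valid_instance I \<longrightarrow> feasible I (A \<omega> I) \<and>
             (\<lambda>t. real (nbins I (A \<omega> I) t)) \<in> borel_measurable borel)) \<and>
     (\<forall>I. valid_instance I \<longrightarrow>
        (\<lambda>\<omega>. cost I (A \<omega> I)) \<in> borel_measurable M \<and>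
        (\<lambda>\<omega>. migrated_size I (A \<omega> I)) \<in> borel_measurable M)"

definition exp_cost :: "'r measure \<Rightarrow> ('r \<Rightarrow> item list \<Rightarrow> schedule) \<Rightarrow> item list \<Rightarrow> ennreal" where
  "exp_cost M A I = (\<integral>\<^sup>+ \<omega>. cost I (A \<omega> I) \<partial>M)"

definition exp_migrated :: "'r measure \<Rightarrow> ('r \<Rightarrow> item list \<Rightarrow> schedule) \<Rightarrow> item list \<Rightarrow> ennreal" where
  "exp_migrated M A I = (\<integral>\<^sup>+ \<omega>. migrated_size I (A \<omega> I) \<partial>M)"

end

theory Submission
  imports Defs
begin


definition inst :: "nat \<Rightarrow> nat \<Rightarrow> real \<Rightarrow> (nat \<Rightarrow> nat) \<Rightarrow> item list" where
  "inst k m \<mu> f = map (\<lambda>i. (0, 1 / real k, if i mod k = f (i div k) then \<mu> else 1)) [0..<m*k]"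

definition surv :: "nat \<Rightarrow> nat \<Rightarrow> (nat \<Rightarrow> nat) \<Rightarrow> nat set" where
  "surv k m f = {i. i < m*k \<and> i mod k = f (i div k)}"

lemma inst_len[simp]: "length (inst k m \<mu> f) = m*k"
  by (simp add: inst_def)

lemma inst_nth:
  assumes "i < m*k"
  shows "arr (inst k m \<mu> f ! i) = 0" "sz (inst k m \<mu> f ! i) = 1 / real k"
    "dur (inst k m \<mu> f ! i) = (if i mod k = f (i div k) then \<mu> else 1)"
  using assms by (simp_all add: inst_def arr_def sz_def dur_def)

lemma inst_set: "set (inst k m \<mu> f) = (\<lambda>i. (0, 1 / real k, if i mod k = f (i div k) then \<mu> else 1)) ` {..<m*k}"
  by (auto simp: inst_def)

lemma inst_valid:
  assumes "k \<ge> 1" "\<mu> \<ge> 1"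
  shows "valid_instance (inst k m \<mu> f)"
proof -
  have "map arr (inst k m \<mu> f) = replicate (m*k) 0"
    by (simp add: inst_def arr_def comp_def map_replicate_const)
  moreover have "sorted (replicate n (0::real))" for n by (induction n) auto
  ultimately show ?thesis using assms
    by (auto simp: valid_instance_def inst_set arr_def sz_def dur_def)
qed

lemma inst_total:
  assumes "k \<ge> 1"
  shows "total_size (inst k m \<mu> f) = m"
proof -
  have "map sz (inst k m \<mu> f) = map (\<lambda>_. 1 / real k) [0..<m*k]"
    by (simp add: inst_def sz_def)
  then show ?thesis using assms by (simp add: total_size_def sum_list_triv)
qed

lemma inst_ratio:
  assumes "k \<ge> 2" "m \<ge> 1" "\<mu> \<ge> 1" "f 0 < k"
  shows "duration_ratio (inst k m \<mu> f) = \<mu>"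
proof -
  have "dur ` set (inst k m \<mu> f) = (\<lambda>i. if i mod k = f (i div k) then \<mu> else 1) ` {..<m*k}"
    by (simp add: inst_set image_image dur_def)
  also have "\<dots> = {\<mu>, 1}"
  proof
    show "(\<lambda>i. if i mod k = f (i div k) then \<mu> else 1) ` {..<m * k} \<subseteq> {\<mu>, 1}" by auto
    have km: "k \<le> m*k" using assms by simp
    have a: "f 0 < m*k" using assms km by linarith
    define y where "y = (if f 0 = 0 then 1 else (0::nat))"
    have y: "y < k" "y \<noteq> f 0" using assms by (auto simp: y_def)
    have c: "y < m*k" using y km by linarith
    show "{\<mu>, 1} \<subseteq> (\<lambda>i. if i mod k = f (i div k) then \<mu> else 1) ` {..<m * k}"
    proof -
      have "\<mu> \<in> (\<lambda>i. if i mod k = f (i div k) then \<mu> else 1) ` {..<m * k}"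
        by (rule image_eqI[where x="f 0"]) (use a assms in simp_all)
      moreover have "(1::real) \<in> (\<lambda>i. if i mod k = f (i div k) then \<mu> else 1) ` {..<m * k}"
        by (rule image_eqI[where x=y]) (use c y in simp_all)
      ultimately have "\<mu> \<in> (\<lambda>i. if i mod k = f (i div k) then \<mu> else 1) ` {..<m * k}"
          "(1::real) \<in> (\<lambda>i. if i mod k = f (i div k) then \<mu> else 1) ` {..<m * k}" by blast+
      then show ?thesis by simp
    qed
  qed
  finally have "dur ` set (inst k m \<mu> f) = {\<mu>, 1}" .
  moreover have "Max {\<mu>, 1} = \<mu>" "Min {\<mu>, 1} = 1" using assms(3) by (simp_all add: max_def min_def)
  ultimately show ?thesis by (simp add: duration_ratio_def)
qed



lemma present_inst:
  assumes "\<mu> \<ge> 1"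
  shows "present (inst k m \<mu> f) t =
    (if 0 \<le> t \<and> t < 1 then {..<m*k} else if 1 \<le> t \<and> t < \<mu> then surv k m f else {})"
proof -
  have "i \<in> present (inst k m \<mu> f) t \<longleftrightarrow> i \<in> (if 0 \<le> t \<and> t < 1 then {..<m*k} else if 1 \<le> t \<and> t < \<mu> then surv k m f else {})" for i
  proof (cases "i < m*k")
    case True
    then show ?thesis using assms by (cases "i mod k = f (i div k)") (auto simp: present_def inst_nth surv_def)
  next
    case False
    then show ?thesis by (auto simp: present_def surv_def)
  qed
  then show ?thesis by blast
qed

lemma fiber_sum:
  assumes "F \<subseteq> {..<m*k}" "card F \<le> k" "k \<ge> 1"
  shows "(\<Sum>i\<in>F. sz (inst k m \<mu> f ! i)) \<le> 1"
proof -
  have "(\<Sum>i\<in>F. sz (inst k m \<mu> f ! i)) = (\<Sum>i\<in>F. 1 / real k)"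
    using assms(1) by (intro sum.cong) (auto simp: inst_nth)
  also have "\<dots> = card F / real k" by simp
  also have "\<dots> \<le> 1" using assms by simp
  finally show ?thesis .
qed

lemma opt_le:
  assumes "\<And>i. i \<in> present (inst k m \<mu> f) t \<Longrightarrow> h i < K"
    and "\<And>b. card {i\<in>present (inst k m \<mu> f) t. h i = b} \<le> k" "k \<ge> 1"
  shows "opt_at (inst k m \<mu> f) t \<le> K"
  unfolding opt_at_def
proof (rule Least_le, intro exI conjI ballI allI)
  fix b
  show "(\<Sum>i\<in>{i \<in> present (inst k m \<mu> f) t. h i = b}. sz (inst k m \<mu> f ! i)) \<le> 1"
    by (rule fiber_sum) (use assms in \<open>auto simp: present_def\<close>)
qed (rule assms(1))

lemma block_sub:
  assumes "k \<ge> 1"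
  shows "{i::nat. i div k = b} \<subseteq> {b*k..<b*k+k}"
proof
  fix i assume "i \<in> {i::nat. i div k = b}"
  then have d: "i div k = b" by simp
  have e: "i = i div k * k + i mod k" by simp
  have "i mod k < k" using assms by simp
  moreover have e2: "i = b*k + i mod k" using d e by simp
  ultimately have "b*k \<le> i" "i < b*k+k" by linarith+
  then show "i \<in> {b*k..<b*k+k}" by simp
qed

lemma finite_block: "k \<ge> 1 \<Longrightarrow> finite {i::nat. i div k = b}"
  by (rule finite_subset[OF block_sub]) auto

lemma card_block: "card {i::nat. i div k = b} \<le> k"
proof (cases "k \<ge> 1")
  case True
  then have "card {i::nat. i div k = b} \<le> card {b*k..<b*k+k}"
    by (intro card_mono block_sub) auto
  then show ?thesis by simp
next
  case False
  then have "k = 0" by simp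
  then show ?thesis by (cases "b = 0") auto
qed

lemma opt_phase1:
  assumes "\<mu> \<ge> 1" "k \<ge> 1" "0 \<le> t" "t < 1"
  shows "opt_at (inst k m \<mu> f) t \<le> m"
proof -
  have P: "present (inst k m \<mu> f) t = {..<m*k}" using assms by (simp add: present_inst)
  show ?thesis
  proof (rule opt_le[where h="\<lambda>i. i div k"])
    fix i assume "i \<in> present (inst k m \<mu> f) t"
    then have "i < m * k" by (simp add: P)
    then show "i div k < m" by (simp add: less_mult_imp_div_less)
  next
    fix b
    have "card {i \<in> present (inst k m \<mu> f) t. i div k = b} \<le> card {i::nat. i div k = b}"
    proof (rule card_mono)
      show "finite {x::nat. x div k = b}" using assms(2) by (rule finite_block)
      show "{i \<in> present (inst k m \<mu> f) t. i div k = b} \<subseteq> {x. x div k = b}" by blast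
    qed
    also have "\<dots> \<le> k" by (rule card_block)
    finally show "card {i \<in> present (inst k m \<mu> f) t. i div k = b} \<le> k" .
  qed (rule assms(2))
qed

lemma opt_phase2:
  assumes "\<mu> \<ge> 1" "k \<ge> 1" "1 \<le> t" "t < \<mu>" "m = k * r"
  shows "opt_at (inst k m \<mu> f) t \<le> r"
proof -
  have P: "present (inst k m \<mu> f) t = surv k m f" using assms by (simp add: present_inst)
  show ?thesis
  proof (rule opt_le[where h="\<lambda>i. i div k div k"])
    fix i assume "i \<in> present (inst k m \<mu> f) t"
    then have "i < m * k" by (simp add: P surv_def)
    then have "i div k < m" by (simp add: less_mult_imp_div_less)
    then show "i div k div k < r" using assms(5) by (metis less_mult_imp_div_less mult.commute)
  next
    fix b
    let ?S = "{i \<in> present (inst k m \<mu> f) t. i div k div k = b}"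
    have inj: "inj_on (\<lambda>i. i div k) ?S"
    proof (rule inj_onI)
      fix i j assume ij: "i \<in> ?S" "j \<in> ?S" "i div k = j div k"
      then have "i mod k = j mod k" by (simp add: P surv_def)
      then show "i = j" using ij(3) by (metis div_mult_mod_eq)
    qed
    have "card ?S = card ((\<lambda>i. i div k) ` ?S)" using card_image[OF inj] by simp
    also have "\<dots> \<le> card {x::nat. x div k = b}"
    proof (rule card_mono)
      show "finite {x::nat. x div k = b}" using assms(2) by (rule finite_block)
      show "(\<lambda>i. i div k) ` ?S \<subseteq> {x. x div k = b}" by blast
    qed
    also have "\<dots> \<le> k" by (rule card_block)
    finally show "card ?S \<le> k" .
  qed (rule assms(2))
qed

lemma opt_out:
  assumes "\<mu> \<ge> 1" "k \<ge> 1" "\<not> (0 \<le> t \<and> t < \<mu>)"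
  shows "opt_at (inst k m \<mu> f) t = 0"
proof -
  have "opt_at (inst k m \<mu> f) t \<le> 0"
    by (rule opt_le[where h="\<lambda>i. 0"]) (use assms in \<open>auto simp: present_inst\<close>)
  then show ?thesis by simp
qed



lemma prod_bound:
  fixes a :: "'a \<Rightarrow> real"
  assumes "finite X" "\<And>x. x \<in> X \<Longrightarrow> 0 \<le> a x" "\<And>x. x \<in> X \<Longrightarrow> a x \<le> 1" "sum a X \<le> 1"
  shows "(\<Prod>x\<in>X. 1 - a x) \<le> 1 - sum a X / 2"
proof -
  have "(\<Prod>x\<in>X. 1 - a x) \<le> (\<Prod>x\<in>X. exp (- a x))"
  proof (rule prod_mono)
    fix x assume "x \<in> X"
    then show "0 \<le> 1 - a x \<and> 1 - a x \<le> exp (- a x)"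
      using assms exp_ge_add_one_self[of "- a x"] by auto
  qed
  also have "\<dots> = exp (- sum a X)" using assms(1) by (simp add: exp_sum[symmetric] sum_negf)
  also have "\<dots> = 1 / exp (sum a X)" by (simp add: exp_minus inverse_eq_divide)
  also have "\<dots> \<le> 1 / (1 + sum a X)"
  proof -
    have s0: "0 \<le> sum a X" using assms by (auto intro: sum_nonneg)
    have "1 + sum a X \<le> exp (sum a X)" by (rule exp_ge_add_one_self)
    then show ?thesis using s0 by (intro divide_left_mono) (auto intro: mult_pos_pos)
  qed
  also have "\<dots> \<le> 1 - sum a X / 2"
  proof -
    have s0: "0 \<le> sum a X" using assms by (auto intro: sum_nonneg)
    let ?s = "sum a X"
    have p: "0 \<le> ?s * (1 - ?s)" using s0 assms(4) by (intro mult_nonneg_nonneg) auto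
    have "(1 + ?s) * (1 - ?s / 2) = 1 + ?s * (1 - ?s) / 2" by (simp add: field_simps)
    then have "1 \<le> (1 + ?s) * (1 - ?s / 2)" using p by linarith
    then show ?thesis using s0 by (simp add: divide_simps mult.commute)
  qed
  finally show ?thesis .
qed

lemma fib_sum:
  assumes "finite Y" "finite B" "g ` Y \<subseteq> B"
  shows "(\<Sum>b\<in>B. card {y\<in>Y. g y = b}) = card Y"
proof -
  have "Y = (\<Union>b\<in>B. {y\<in>Y. g y = b})" using assms by auto
  then have "card Y = card (\<Union>b\<in>B. {y\<in>Y. g y = b})" by simp
  also have "\<dots> = (\<Sum>b\<in>B. card {y\<in>Y. g y = b})"
    by (rule card_UN_disjoint) (use assms in auto)
  finally show ?thesis by simp
qed

lemma card_decomp: "card {i::nat. i < m*k \<and> P i} = (\<Sum>x<m. card {y. y < k \<and> P (x*k+y)})"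
proof (induction m arbitrary: P)
  case 0 then show ?case by simp
next
  case (Suc m)
  have "{i. i < Suc m * k \<and> P i} = {i. i < m*k \<and> P i} \<union> (\<lambda>y. m*k+y) ` {y. y < k \<and> P (m*k+y)}"
  proof (rule set_eqI, rule iffI)
    fix i assume i: "i \<in> {i. i < Suc m * k \<and> P i}"
    show "i \<in> {i. i < m*k \<and> P i} \<union> (\<lambda>y. m*k+y) ` {y. y < k \<and> P (m*k+y)}"
    proof (cases "i < m*k")
      case True then show ?thesis using i by simp
    next
      case False
      then have "i - m*k < k" "m*k + (i - m*k) = i" using i by auto
      then have "i \<in> (\<lambda>y. m*k+y) ` {y. y < k \<and> P (m*k+y)}" using i
        by (intro image_eqI[where x="i - m*k"]) auto
      then show ?thesis by blast
    qed
  next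
    fix i assume "i \<in> {i. i < m*k \<and> P i} \<union> (\<lambda>y. m*k+y) ` {y. y < k \<and> P (m*k+y)}"
    then show "i \<in> {i. i < Suc m * k \<and> P i}" by auto
  qed
  moreover have "card ((\<lambda>y. m*k+y) ` {y. y < k \<and> P (m*k+y)}) = card {y. y < k \<and> P (m*k+y)}"
    by (rule card_image) (auto simp: inj_on_def)
  moreover have "card ({i. i < m*k \<and> P i} \<union> (\<lambda>y. m*k+y) ` {y. y < k \<and> P (m*k+y)})
        = card {i. i < m*k \<and> P i} + card ((\<lambda>y. m*k+y) ` {y. y < k \<and> P (m*k+y)})"
      by (rule card_Un_disjoint) auto
  ultimately have "card {i. i < Suc m * k \<and> P i} = card {i. i < m*k \<and> P i} + card {y. y < k \<and> P (m*k+y)}"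
    by simp
  then show ?case using Suc by simp
qed

lemma surv_eq:
  assumes "\<And>x. x < m \<Longrightarrow> f x < k"
  shows "surv k m f = (\<lambda>x. x*k + f x) ` {..<m}"
proof
  show "surv k m f \<subseteq> (\<lambda>x. x*k + f x) ` {..<m}"
  proof
    fix i assume "i \<in> surv k m f"
    then have "i < m*k" "i mod k = f (i div k)" by (auto simp: surv_def)
    moreover have "i div k < m" using \<open>i < m*k\<close> by (simp add: less_mult_imp_div_less)
    moreover have "i = (i div k) * k + f (i div k)" using \<open>i mod k = f (i div k)\<close>
      by (metis div_mult_mod_eq)
    ultimately show "i \<in> (\<lambda>x. x*k + f x) ` {..<m}"
      by (intro image_eqI[where x="i div k"]) auto
  qed
next
  show "(\<lambda>x. x*k + f x) ` {..<m} \<subseteq> surv k m f"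
  proof
    fix i assume "i \<in> (\<lambda>x. x*k + f x) ` {..<m}"
    then obtain x where x: "x < m" "i = x*k + f x" by auto
    have fx: "f x < k" using assms x by auto
    have kp: "0 < k" using fx by simp
    have "i div k = x" using x fx kp by simp
    moreover have "i mod k = f x" using x fx kp by simp
    moreover have "i < m*k"
    proof -
      have "x*k + f x < x*k + k" using fx by simp
      also have "\<dots> = Suc x * k" by simp
      also have "\<dots> \<le> m*k" using x by (intro mult_le_mono1) simp
      finally show ?thesis using x by simp
    qed
    ultimately show "i \<in> surv k m f" by (simp add: surv_def)
  qed
qed



lemma core:
  fixes L :: "nat \<Rightarrow> nat"
  assumes k: "k \<ge> 1" and fib: "\<And>b. card {i. i < m*k \<and> L i = b} \<le> k"
  shows "real (card (\<Pi>\<^sub>E x\<in>{..<m}. {..<k})) * m / 2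
           \<le> (\<Sum>f\<in>(\<Pi>\<^sub>E x\<in>{..<m}. {..<k}). real (card (L ` surv k m f)))"
proof -
  define F where "F = (\<Pi>\<^sub>E x\<in>{..<m}. {..<k})"
  define B where "B = L ` {..<m*k}"
  define c where "c b x = card {y. y < k \<and> L (x*k+y) = b}" for b x
  define s where "s b = card {i. i < m*k \<and> L i = b}" for b
  have finF: "finite F" by (simp add: F_def finite_PiE)
  have finB: "finite B" by (simp add: B_def)
  have cardF: "card F = k ^ m" by (simp add: F_def card_PiE)
  have sc: "s b = (\<Sum>x<m. c b x)" for b unfolding s_def c_def by (rule card_decomp)
  have ck: "c b x \<le> k" for b x
    unfolding c_def by (rule order_trans[OF card_mono[of "{..<k}"]]) auto
  have Fk: "f x < k" if "f \<in> F" "x < m" for f x using that by (auto simp: F_def)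
  have survB: "L ` surv k m f \<subseteq> B" for f by (auto simp: B_def surv_def)
  have step1: "real (card (L ` surv k m f)) = (\<Sum>b\<in>B. of_bool (b \<in> L ` surv k m f))" for f
  proof -
    have "(\<Sum>b\<in>B. of_bool (b \<in> L ` surv k m f)) = real (card (B \<inter> {b. b \<in> L ` surv k m f}))"
      using finB by (intro sum_of_bool_eq finB)
    also have "B \<inter> {b. b \<in> L ` surv k m f} = L ` surv k m f" using survB[of f] by blast
    finally show ?thesis by simp
  qed
  have step2: "(\<Sum>f\<in>F. of_bool (b \<in> L ` surv k m f)) \<ge> real (k^m) * (real (s b) / real k) / 2"
    if "b \<in> B" for b
  proof -
    have miss: "{f\<in>F. b \<notin> L ` surv k m f} = (\<Pi>\<^sub>E x\<in>{..<m}. {y. y < k \<and> L (x*k+y) \<noteq> b})"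
    proof (rule set_eqI)
      fix f
      show "f \<in> {f\<in>F. b \<notin> L ` surv k m f} \<longleftrightarrow> f \<in> (\<Pi>\<^sub>E x\<in>{..<m}. {y. y < k \<and> L (x*k+y) \<noteq> b})"
      proof
        assume a: "f \<in> {f\<in>F. b \<notin> L ` surv k m f}"
        then have "surv k m f = (\<lambda>x. x*k + f x) ` {..<m}" using Fk by (intro surv_eq) auto
        then show "f \<in> (\<Pi>\<^sub>E x\<in>{..<m}. {y. y < k \<and> L (x*k+y) \<noteq> b})"
          using a by (auto simp: F_def PiE_def Pi_def)
      next
        assume a: "f \<in> (\<Pi>\<^sub>E x\<in>{..<m}. {y. y < k \<and> L (x*k+y) \<noteq> b})"
        then have fF: "f \<in> F" by (auto simp: F_def PiE_def Pi_def)
        then have "surv k m f = (\<lambda>x. x*k + f x) ` {..<m}" using Fk by (intro surv_eq) auto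
        then show "f \<in> {f\<in>F. b \<notin> L ` surv k m f}" using a fF by (auto simp: PiE_def Pi_def)
      qed
    qed
    have cm: "card {y. y < k \<and> L (x*k+y) \<noteq> b} = k - c b x" for x
    proof -
      have "{y. y < k \<and> L (x*k+y) \<noteq> b} = {..<k} - {y. y < k \<and> L (x*k+y) = b}" by auto
      moreover have "card ({..<k} - {y. y < k \<and> L (x*k+y) = b}) = card {..<k} - card {y. y < k \<and> L (x*k+y) = b}"
        by (rule card_Diff_subset) auto
      ultimately show ?thesis unfolding c_def by simp
    qed
    have "card {f\<in>F. b \<notin> L ` surv k m f} = (\<Prod>x<m. k - c b x)"
      by (simp add: miss card_PiE cm)
    then have "real (card {f\<in>F. b \<notin> L ` surv k m f}) = (\<Prod>x<m. real (k - c b x))"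
      by (simp add: of_nat_prod)
    also have "\<dots> = (\<Prod>x<m. real k - real (c b x))"
      by (intro prod.cong refl of_nat_diff ck)
    also have "\<dots> = (\<Prod>x<m. real k * (1 - real (c b x) / real k))"
    proof (intro prod.cong refl)
      fix x
      have "real k * (1 - real (c b x) / real k) = real k - real k * (real (c b x) / real k)"
        by (simp add: right_diff_distrib)
      also have "real k * (real (c b x) / real k) = real (c b x)" using k by simp
      finally show "real k - real (c b x) = real k * (1 - real (c b x) / real k)" by simp
    qed
    also have "\<dots> = real k ^ m * (\<Prod>x<m. 1 - real (c b x) / real k)"
      by (simp add: prod.distrib)
    finally have rmiss2: "real (card {f\<in>F. b \<notin> L ` surv k m f}) = real k ^ m * (\<Prod>x<m. 1 - real (c b x) / real k)" .
    have sumA: "(\<Sum>x<m. real (c b x) / real k) = real (s b) / real k"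
      by (simp add: sc sum_divide_distrib)
    have pb: "(\<Prod>x<m. 1 - real (c b x) / real k) \<le> 1 - (\<Sum>x<m. real (c b x) / real k) / 2"
    proof (rule prod_bound)
      show "(\<Sum>x<m. real (c b x) / real k) \<le> 1" using sumA fib[of b] k by (simp add: s_def)
    qed (use ck k in auto)
    have "(\<Sum>f\<in>F. of_bool (b \<in> L ` surv k m f)) = real (card (F \<inter> {f. b \<in> L ` surv k m f}))"
      using finF by (intro sum_of_bool_eq finF)
    also have "F \<inter> {f. b \<in> L ` surv k m f} = F - {f\<in>F. b \<notin> L ` surv k m f}" by blast
    also have "card (F - {f\<in>F. b \<notin> L ` surv k m f}) = card F - card {f\<in>F. b \<notin> L ` surv k m f}"
      using finF by (intro card_Diff_subset) auto
    also have "real (card F - card {f\<in>F. b \<notin> L ` surv k m f})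
        = real (card F) - real (card {f\<in>F. b \<notin> L ` surv k m f})"
      using finF by (intro of_nat_diff card_mono) auto
    also have "\<dots> = real k ^ m * (1 - (\<Prod>x<m. 1 - real (c b x) / real k))"
      by (simp add: rmiss2 cardF algebra_simps)
    finally have E: "(\<Sum>f\<in>F. of_bool (b \<in> L ` surv k m f)) = real k ^ m * (1 - (\<Prod>x<m. 1 - real (c b x) / real k))" .
    have ineq: "real k ^ m * ((\<Sum>x<m. real (c b x) / real k) / 2) \<le> real k ^ m * (1 - (\<Prod>x<m. 1 - real (c b x) / real k))"
      using pb by (intro mult_left_mono) auto
    have eq: "real (k^m) * (real (s b) / real k) / 2 = real k ^ m * ((\<Sum>x<m. real (c b x) / real k) / 2)"
      using sumA by simp
    show ?thesis using E ineq eq by linarith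
  qed
  have "(\<Sum>b\<in>B. real (k^m) * (real (s b) / real k) / 2) \<le> (\<Sum>b\<in>B. \<Sum>f\<in>F. of_bool (b \<in> L ` surv k m f))"
    by (intro sum_mono step2)
  also have "\<dots> = (\<Sum>f\<in>F. \<Sum>b\<in>B. of_bool (b \<in> L ` surv k m f))" by (rule sum.swap)
  also have "\<dots> = (\<Sum>f\<in>F. real (card (L ` surv k m f)))" by (simp only: step1)
  finally have "(\<Sum>b\<in>B. real (k^m) * (real (s b) / real k) / 2) \<le> (\<Sum>f\<in>F. real (card (L ` surv k m f)))" .
  moreover have "(\<Sum>b\<in>B. real (k^m) * (real (s b) / real k) / 2) = real (k^m) / (2 * real k) * real (\<Sum>b\<in>B. s b)"
    by (simp add: sum_distrib_left sum_divide_distrib mult.commute)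
  moreover have "(\<Sum>b\<in>B. s b) = m * k"
  proof -
    have "(\<Sum>b\<in>B. card {y\<in>{..<m*k}. L y = b}) = card {..<m*k}"
      by (rule fib_sum) (auto simp: B_def)
    then show ?thesis by (simp add: s_def)
  qed
  moreover have "real (k^m) / (2 * real k) * real (m * k) = real (card F) * real m / 2"
    using k by (simp add: cardF field_simps)
  ultimately show ?thesis unfolding F_def[symmetric] by simp
qed



lemma nbins_phase1:
  assumes feas: "feasible (inst k m \<mu> f) x" and k: "k \<ge> 1" and mu: "\<mu> \<ge> 1" and t: "0 \<le> t" "t < 1"
  shows "m \<le> nbins (inst k m \<mu> f) x t"
proof -
  let ?I = "inst k m \<mu> f"
  have P: "present ?I t = {..<m*k}" using mu t by (simp add: present_inst)
  let ?B = "x t ` {..<m*k}"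
  have fibk: "card {i\<in>{..<m*k}. x t i = b} \<le> k" for b
  proof -
    have "(\<Sum>i\<in>{i\<in>present ?I t. x t i = b}. sz (?I!i)) \<le> 1" using feas by (simp add: feasible_def)
    moreover have "(\<Sum>i\<in>{i\<in>present ?I t. x t i = b}. sz (?I!i)) = (\<Sum>i\<in>{i\<in>{..<m*k}. x t i = b}. 1 / real k)"
      unfolding P by (intro sum.cong refl) (auto simp: inst_nth)
    ultimately have "real (card {i\<in>{..<m*k}. x t i = b}) / real k \<le> 1" by simp
    then show ?thesis using k by (simp add: divide_simps)
  qed
  have "m * k = card {..<m*k}" by simp
  also have "\<dots> = (\<Sum>b\<in>?B. card {i\<in>{..<m*k}. x t i = b})"
    by (rule fib_sum[symmetric]) auto
  also have "\<dots> \<le> (\<Sum>b\<in>?B. k)" by (intro sum_mono fibk)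
  also have "\<dots> = card ?B * k" by simp
  finally have "m * k \<le> card ?B * k" .
  then have "m \<le> card ?B" using k by simp
  then show ?thesis by (simp add: nbins_def P)
qed

lemma migr_ge:
  assumes "i \<in> surv k m f" "0 \<le> t" "t < \<mu>" "x t i \<noteq> x 0 i"
  shows "1 \<le> migrations (inst k m \<mu> f) x i"
proof -
  let ?I = "inst k m \<mu> f"
  have i: "i < m*k" "i mod k = f (i div k)" using assms(1) by (auto simp: surv_def)
  let ?ts = "[0, t]"
  have mem: "?ts \<in> {ts. sorted ts \<and> set ts \<subseteq> {arr (?I!i)..<arr (?I!i) + dur (?I!i)}}"
    using assms i by (simp add: inst_nth)
  have "{j. Suc j < length ?ts \<and> x (?ts!j) i \<noteq> x (?ts!Suc j) i} = {0}"
    using assms(4) by auto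
  then have "ennreal (real (card {j. Suc j < length ?ts \<and> x (?ts!j) i \<noteq> x (?ts!Suc j) i})) = 1"
    by simp
  moreover have "ennreal (real (card {j. Suc j < length ?ts \<and> x (?ts!j) i \<noteq> x (?ts!Suc j) i}))
      \<le> migrations ?I x i"
    unfolding migrations_def by (rule SUP_upper[OF mem])
  ultimately show ?thesis by simp
qed

lemma migr_size_ge:
  assumes "D \<subseteq> surv k m f" "0 \<le> t" "t < \<mu>" "\<And>i. i \<in> D \<Longrightarrow> x t i \<noteq> x 0 i" "k \<ge> 1"
  shows "ennreal (real (card D)) \<le> ennreal (real k) * migrated_size (inst k m \<mu> f) x"
proof -
  let ?I = "inst k m \<mu> f"
  have Dsub: "D \<subseteq> {..<m*k}" using assms(1) by (auto simp: surv_def)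
  have finD: "finite D" using Dsub finite_subset by blast
  have "(\<Sum>i\<in>D. ennreal (1 / real k)) \<le> (\<Sum>i\<in>D. ennreal (sz (?I!i)) * migrations ?I x i)"
  proof (rule sum_mono)
    fix i assume iD: "i \<in> D"
    then have "sz (?I!i) = 1 / real k" using Dsub by (auto simp: inst_nth)
    moreover have "1 \<le> migrations ?I x i" using migr_ge[of i k m f t \<mu> x] iD assms by auto
    ultimately show "ennreal (1 / real k) \<le> ennreal (sz (?I!i)) * migrations ?I x i"
      using mult_left_mono[of 1 "migrations ?I x i" "ennreal (1 / real k)"] by simp
  qed
  also have "\<dots> \<le> migrated_size ?I x"
    unfolding migrated_size_def using Dsub by (intro sum_mono2) auto
  finally have le0: "(\<Sum>i\<in>D. ennreal (1 / real k)) \<le> migrated_size ?I x" .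
  have "(\<Sum>i\<in>D. ennreal (1 / real k)) = ennreal (\<Sum>i\<in>D. 1 / real k)"
    by (rule sum_ennreal) simp
  also have "(\<Sum>i\<in>D. 1 / real k) = real (card D) / real k" by simp
  finally have le: "ennreal (real (card D) / real k) \<le> migrated_size ?I x" using le0 by simp
  have "ennreal (real (card D)) = ennreal (real k) * ennreal (real (card D) / real k)"
    using assms(5) by (simp add: ennreal_mult[symmetric])
  also have "\<dots> \<le> ennreal (real k) * migrated_size ?I x" by (intro mult_left_mono le) simp
  finally show ?thesis .
qed

lemma phase2_bound:
  assumes k: "k \<ge> 1" and mu: "\<mu> \<ge> 1" and t: "1 \<le> t" "t < \<mu>" and L: "\<And>i. i < m*k \<Longrightarrow> x 0 i = L i"
  shows "ennreal (real (card (L ` surv k m f)))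
     \<le> ennreal (real (nbins (inst k m \<mu> f) x t)) + ennreal (real k) * migrated_size (inst k m \<mu> f) x"
proof -
  let ?S = "surv k m f"
  define D where "D = {i\<in>?S. x t i \<noteq> x 0 i}"
  have P: "present (inst k m \<mu> f) t = ?S" using mu t by (simp add: present_inst)
  have finS: "finite ?S" by (rule finite_subset[of _ "{..<m*k}"]) (auto simp: surv_def)
  have "L ` ?S \<subseteq> x t ` ?S \<union> L ` D"
  proof
    fix b assume "b \<in> L ` ?S"
    then obtain i where i: "i \<in> ?S" "b = L i" by auto
    have "i < m*k" using i by (simp add: surv_def)
    then have "x 0 i = L i" by (rule L)
    then show "b \<in> x t ` ?S \<union> L ` D"
    proof (cases "x t i = x 0 i")
      case True
      then have "b = x t i" using i \<open>x 0 i = L i\<close> by simp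
      then show ?thesis using i(1) by blast
    next
      case False
      then have "i \<in> D" using i by (simp add: D_def)
      then show ?thesis using i by blast
    qed
  qed
  then have "card (L ` ?S) \<le> card (x t ` ?S \<union> L ` D)"
    using finS by (intro card_mono) (auto simp: D_def)
  also have "\<dots> \<le> card (x t ` ?S) + card (L ` D)" by (rule card_Un_le)
  also have "\<dots> \<le> card (x t ` ?S) + card D"
    using finS by (intro add_left_mono card_image_le) (auto simp: D_def)
  finally have c: "card (L ` ?S) \<le> nbins (inst k m \<mu> f) x t + card D" by (simp add: nbins_def P)
  have "ennreal (real (card D)) \<le> ennreal (real k) * migrated_size (inst k m \<mu> f) x"
    by (rule migr_size_ge[where t=t]) (use t k in \<open>auto simp: D_def\<close>)
  moreover have "ennreal (real (card (L ` ?S))) \<le> ennreal (real (nbins (inst k m \<mu> f) x t)) + ennreal (real (card D))"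
    using c by (simp add: ennreal_plus[symmetric] del: ennreal_plus)
  ultimately show ?thesis by (meson add_left_mono order_trans)
qed



lemma cost_bound:
  assumes feas: "feasible (inst k m \<mu> f) x"
    and meas: "(\<lambda>t. real (nbins (inst k m \<mu> f) x t)) \<in> borel_measurable borel"
    and k: "k \<ge> 1" and mu: "\<mu> \<ge> 1" and L: "\<And>i. i < m*k \<Longrightarrow> x 0 i = L i"
  shows "ennreal (real m + (\<mu> - 1) * real (card (L ` surv k m f)))
     \<le> cost (inst k m \<mu> f) x + ennreal ((\<mu> - 1) * real k) * migrated_size (inst k m \<mu> f) x"
proof -
  let ?I = "inst k m \<mu> f"
  define N where "N t = ennreal (real (nbins ?I x t))" for t
  define C where "C = ennreal (real k) * migrated_size ?I x"
  define c where "c = ennreal (real (card (L ` surv k m f)))"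
  have Nm: "N \<in> borel_measurable lborel"
    unfolding N_def using meas by (simp add: measurable_compose[OF _ measurable_ennreal])
  have pw: "ennreal (real m) * indicator {0..<1} t + c * indicator {1..<\<mu>} t \<le> N t + C * indicator {1..<\<mu>} t" for t
  proof (cases "t \<in> {0..<1}")
    case True
    then have "t \<notin> {1..<\<mu>}" by auto
    moreover have "m \<le> nbins ?I x t" using True by (intro nbins_phase1[OF feas k mu]) auto
    ultimately show ?thesis using True by (simp add: N_def)
  next
    case False
    show ?thesis
    proof (cases "t \<in> {1..<\<mu>}")
      case True
      have t1: "1 \<le> t" and t2: "t < \<mu>" using True by auto
      have "c \<le> N t + C" unfolding c_def N_def C_def
        by (rule phase2_bound[where x=x and L=L and m=m and f=f, OF k mu t1 t2 L])
      then show ?thesis using True False by simp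
    next
      case False2: False
      then show ?thesis using False by simp
    qed
  qed
  have "(\<integral>\<^sup>+ (t::real). ennreal (real m) * indicator {0..<1} t + c * indicator {1..<\<mu>} t \<partial>lborel)
      = (\<integral>\<^sup>+ (t::real). ennreal (real m) * indicator {0..<1} t \<partial>lborel) + (\<integral>\<^sup>+ (t::real). c * indicator {1..<\<mu>} t \<partial>lborel)"
    by (rule nn_integral_add[where f="\<lambda>t. ennreal (real m) * indicator {0..<1} t" and g="\<lambda>t. c * indicator {1..<\<mu>} t"]) auto
  also have "\<dots> = ennreal (real m) + c * ennreal (\<mu> - 1)"
    using mu by (simp add: nn_integral_cmult_indicator)
  finally have lhs: "(\<integral>\<^sup>+ (t::real). ennreal (real m) * indicator {0..<1} t + c * indicator {1..<\<mu>} t \<partial>lborel)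
      = ennreal (real m) + c * ennreal (\<mu> - 1)" .
  have "(\<integral>\<^sup>+ t. N t + C * indicator {1..<\<mu>} t \<partial>lborel)
      = (\<integral>\<^sup>+ t. N t \<partial>lborel) + (\<integral>\<^sup>+ t. C * indicator {1..<\<mu>} t \<partial>lborel)"
    by (rule nn_integral_add[where f=N and g="\<lambda>t. C * indicator {1..<\<mu>} t"]) (use Nm in auto)
  also have "\<dots> = cost ?I x + C * ennreal (\<mu> - 1)"
    using mu by (simp add: nn_integral_cmult_indicator cost_def N_def)
  finally have rhs: "(\<integral>\<^sup>+ t. N t + C * indicator {1..<\<mu>} t \<partial>lborel) = cost ?I x + C * ennreal (\<mu> - 1)" .
  have "ennreal (real m) + c * ennreal (\<mu> - 1) \<le> cost ?I x + C * ennreal (\<mu> - 1)"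
    using nn_integral_mono[of lborel "\<lambda>t::real. ennreal (real m) * indicator {0..<1} t + c * indicator {1..<\<mu>} t"
        "\<lambda>t. N t + C * indicator {1..<\<mu>} t"] pw lhs rhs by simp
  moreover have "ennreal (real m + (\<mu> - 1) * real (card (L ` surv k m f))) = ennreal (real m) + c * ennreal (\<mu> - 1)"
    using mu by (simp add: c_def ennreal_mult[symmetric] mult.commute)
  moreover have "C * ennreal (\<mu> - 1) = ennreal ((\<mu> - 1) * real k) * migrated_size ?I x"
    using mu by (simp add: C_def ennreal_mult mult.commute mult.left_commute)
  ultimately show ?thesis by simp
qed



lemma OPT_bound:
  assumes k: "k \<ge> 1" and mu: "\<mu> \<ge> 1" and mr: "m = k * r"
  shows "OPT (inst k m \<mu> f) \<le> ennreal (real m + (\<mu> - 1) * real r)"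
proof -
  let ?I = "inst k m \<mu> f"
  have pw: "ennreal (real (opt_at ?I t)) \<le> ennreal (real m) * indicator {0..<1} t + ennreal (real r) * indicator {1..<\<mu>} t" for t
  proof (cases "t \<in> {0..<1}")
    case True
    then have "t \<notin> {1..<\<mu>}" by auto
    moreover have "opt_at ?I t \<le> m" using True by (intro opt_phase1[OF mu k]) auto
    ultimately show ?thesis using True by simp
  next
    case False
    show ?thesis
    proof (cases "t \<in> {1..<\<mu>}")
      case True
      have "opt_at ?I t \<le> r" using True by (intro opt_phase2[OF mu k _ _ mr]) auto
      then show ?thesis using True False by simp
    next
      case False2: False
      then have "opt_at ?I t = 0" using False by (intro opt_out[OF mu k]) auto
      then show ?thesis by simp
    qed
  qed
  have "OPT ?I \<le> (\<integral>\<^sup>+ (t::real). ennreal (real m) * indicator {0..<1} t + ennreal (real r) * indicator {1..<\<mu>} t \<partial>lborel)"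
    unfolding OPT_def by (intro nn_integral_mono pw)
  also have "\<dots> = (\<integral>\<^sup>+ (t::real). ennreal (real m) * indicator {0..<1} t \<partial>lborel) + (\<integral>\<^sup>+ (t::real). ennreal (real r) * indicator {1..<\<mu>} t \<partial>lborel)"
    by (rule nn_integral_add[where f="\<lambda>t. ennreal (real m) * indicator {0..<1} t" and g="\<lambda>t. ennreal (real r) * indicator {1..<\<mu>} t"]) auto
  also have "\<dots> = ennreal (real m) + ennreal (real r) * ennreal (\<mu> - 1)"
    using mu by (simp add: nn_integral_cmult_indicator)
  also have "\<dots> = ennreal (real m + (\<mu> - 1) * real r)"
    using mu by (simp add: ennreal_mult[symmetric] mult.commute)
  finally show ?thesis .
qed

lemma view0:
  assumes mu: "\<mu> \<ge> 1"
  shows "view (inst k m \<mu> f) 0 = map (\<lambda>i. (0, 1 / real k, None)) [0..<m*k]"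
proof -
  have "filter (\<lambda>it. arr it \<le> 0) (inst k m \<mu> f) = inst k m \<mu> f"
    by (simp add: inst_def arr_def)
  then show ?thesis using mu by (simp add: view_def inst_def arr_def sz_def dur_def)
qed



lemma fib_feas:
  assumes feas: "feasible (inst k m \<mu> f) x" and k: "k \<ge> 1" and mu: "\<mu> \<ge> 1"
  shows "card {i. i < m*k \<and> x 0 i = b} \<le> k"
proof -
  let ?I = "inst k m \<mu> f"
  have P: "present ?I 0 = {..<m*k}" using mu by (simp add: present_inst)
  have "(\<Sum>i\<in>{i\<in>present ?I 0. x 0 i = b}. sz (?I!i)) \<le> 1" using feas by (simp add: feasible_def)
  moreover have "(\<Sum>i\<in>{i\<in>present ?I 0. x 0 i = b}. sz (?I!i)) = (\<Sum>i\<in>{i. i < m*k \<and> x 0 i = b}. 1 / real k)"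
    unfolding P by (intro sum.cong) (auto simp: inst_nth)
  ultimately have "real (card {i. i < m*k \<and> x 0 i = b}) / real k \<le> 1" by simp
  then show ?thesis using k by (simp add: divide_simps)
qed

lemma final_arith:
  fixes \<beta> \<mu> \<delta> :: real and k m r :: nat
  assumes b0: "0 \<le> \<beta>" and b1: "\<beta> < \<mu> / 6" and mu: "\<mu> \<ge> 1" and kb: "4 * \<beta> * (\<mu> - 1) \<le> real k"
    and k2: "k \<ge> 2" and cd: "(\<mu> - 1) * real k * \<delta> < 1/4" and mr: "m = k * r" and m0: "m > 0"
    and le: "real m * (1 + (\<mu> - 1) / 2) \<le> \<beta> * (real m + (\<mu> - 1) * real r) + (\<mu> - 1) * real k * (\<delta> * real m)"
  shows False
proof -
  have mpos: "real m > 0" using m0 by simp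
  have rr: "real r = real m / real k" using mr k2 by simp
  have "\<beta> * (real m + (\<mu> - 1) * real r) = real m * (\<beta> + \<beta> * (\<mu> - 1) / real k)"
    using k2 by (simp add: rr field_simps)
  moreover have "\<beta> * (\<mu> - 1) / real k \<le> 1/4"
    using kb k2 by (simp add: divide_simps)
  moreover have "(\<mu> - 1) * real k * (\<delta> * real m) = real m * ((\<mu> - 1) * real k * \<delta>)" by simp
  ultimately have "real m * (1 + (\<mu> - 1) / 2) \<le> real m * (\<beta> + 1/4) + real m * ((\<mu> - 1) * real k * \<delta>)"
    using le mpos by (smt (verit) mult_left_mono)
  also have "\<dots> < real m * (\<beta> + 1/4) + real m * (1/4)" using cd mpos by simp
  finally have "real m * (1 + (\<mu> - 1) / 2) < real m * (\<beta> + 1/2)" by (simp add: algebra_simps)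
  then have "1 + (\<mu> - 1) / 2 < \<beta> + 1/2" using mpos by simp
  then have a: "\<mu> < 2 * \<beta>" by (simp add: field_simps)
  moreover have "6 * \<beta> < \<mu>" using b1 by (simp add: field_simps)
  ultimately show False using mu b0 by linarith
qed



theorem theorem21:
  fixes M :: "'r measure" and A :: "'r \<Rightarrow> item list \<Rightarrow> schedule" and \<mu> :: real
  assumes "randomized_algorithm M A"
    and "\<mu> \<ge> 1"
    and "\<exists>g :: real \<Rightarrow> real. g \<in> o(\<lambda>x. x) \<and>
           (\<forall>I. valid_instance I \<longrightarrow> exp_migrated M A I \<le> ennreal (g (total_size I)))"
  shows "\<forall>\<beta> < \<mu> / 6. \<exists>I. valid_instance I \<and> I \<noteq> [] \<and> duration_ratio I = \<mu> \<and>
           ennreal \<beta> * OPT I < exp_cost M A I"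
proof (intro allI impI)
  fix \<beta> :: real assume \<beta>: "\<beta> < \<mu> / 6"
  have ra: "randomized_algorithm M A" by (rule assms(1))
  have mu: "\<mu> \<ge> 1" by (rule assms(2))
  obtain g :: "real \<Rightarrow> real" where go: "g \<in> o(\<lambda>x. x)"
    and gb: "\<And>I. valid_instance I \<Longrightarrow> exp_migrated M A I \<le> ennreal (g (total_size I))"
    using assms(3) by blast
  have ps: "prob_space M" using ra by (simp add: randomized_algorithm_def)
  define \<beta>' where "\<beta>' = max \<beta> 0"
  have b0: "0 \<le> \<beta>'" by (simp add: \<beta>'_def)
  have b1: "\<beta>' < \<mu> / 6" using \<beta> mu by (simp add: \<beta>'_def)
  have eb: "ennreal \<beta> = ennreal \<beta>'"
    by (cases "\<beta> \<le> 0") (auto simp: \<beta>'_def ennreal_neg max_def)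
  define k where "k = max 2 (nat \<lceil>4 * \<beta>' * (\<mu> - 1)\<rceil>)"
  have k2: "k \<ge> 2" by (simp add: k_def)
  have k1: "k \<ge> 1" using k2 by simp
  have kb: "4 * \<beta>' * (\<mu> - 1) \<le> real k"
  proof -
    have "4 * \<beta>' * (\<mu> - 1) \<le> real (nat \<lceil>4 * \<beta>' * (\<mu> - 1)\<rceil>)" by linarith
    also have "\<dots> \<le> real k" by (simp add: k_def)
    finally show ?thesis .
  qed
  define \<delta> where "\<delta> = 1 / (4 * ((\<mu> - 1) * real k) + 1)"
  have a0: "0 \<le> (\<mu> - 1) * real k" using mu by simp
  have dpos: "\<delta> > 0" using a0 by (simp add: \<delta>_def)
  have cd: "(\<mu> - 1) * real k * \<delta> < 1/4"
    using a0 by (simp add: \<delta>_def field_simps)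
  have "eventually (\<lambda>x. norm (g x) \<le> \<delta> * norm x) at_top"
    using landau_o.smallD[OF go dpos] .
  then obtain N0 where N0: "\<And>x. x \<ge> N0 \<Longrightarrow> norm (g x) \<le> \<delta> * norm x"
    by (auto simp: eventually_at_top_linorder)
  define r where "r = nat \<lceil>max N0 1\<rceil>"
  define m where "m = k * r"
  have r1: "real r \<ge> max N0 1" unfolding r_def by linarith
  have "r \<le> m" using k1 by (simp add: m_def)
  then have mr: "real m \<ge> real r" by simp
  have m0: "m > 0" using r1 k1 by (simp add: m_def)
  have gm: "g (real m) \<le> \<delta> * real m"
  proof -
    have "norm (g (real m)) \<le> \<delta> * norm (real m)" using N0 r1 mr by (intro N0) linarith
    then show ?thesis by simp
  qed
  define F where "F = (\<Pi>\<^sub>E x\<in>{..<m}. {..<k})"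
  have finF: "finite F" by (simp add: F_def finite_PiE)
  have cardF: "card F = k ^ m" by (simp add: F_def card_PiE)
  have cFpos: "card F > 0" using cardF k1 by simp
  have valid: "valid_instance (inst k m \<mu> f)" for f using k1 mu by (rule inst_valid)
  define c where "c = (\<mu> - 1) * real k"
  show "\<exists>I. valid_instance I \<and> I \<noteq> [] \<and> duration_ratio I = \<mu> \<and> ennreal \<beta> * OPT I < exp_cost M A I"
  proof (rule ccontr)
    assume neg: "\<not> ?thesis"
    have ec: "exp_cost M A (inst k m \<mu> f) \<le> ennreal (\<beta>' * (real m + (\<mu> - 1) * real r))" if f: "f \<in> F" for f
    proof -
      have ne: "inst k m \<mu> f \<noteq> []" using m0 k1 by (simp add: inst_def)
      have f0: "f 0 < k" using f m0 by (auto simp: F_def)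
      have dr: "duration_ratio (inst k m \<mu> f) = \<mu>" using k2 m0 mu f0 by (intro inst_ratio) auto
      have "\<not> (ennreal \<beta> * OPT (inst k m \<mu> f) < exp_cost M A (inst k m \<mu> f))"
        using neg valid ne dr by blast
      then have "exp_cost M A (inst k m \<mu> f) \<le> ennreal \<beta>' * OPT (inst k m \<mu> f)"
        by (simp add: not_less eb)
      also have "\<dots> \<le> ennreal \<beta>' * ennreal (real m + (\<mu> - 1) * real r)"
        by (intro mult_left_mono OPT_bound[OF k1 mu]) (auto simp: m_def)
      also have "\<dots> = ennreal (\<beta>' * (real m + (\<mu> - 1) * real r))"
        using b0 by (rule ennreal_mult'[symmetric])
      finally show ?thesis .
    qed
    have em: "exp_migrated M A (inst k m \<mu> f) \<le> ennreal (\<delta> * real m)" for f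
    proof -
      have "exp_migrated M A (inst k m \<mu> f) \<le> ennreal (g (total_size (inst k m \<mu> f)))"
        by (rule gb[OF valid])
      also have "\<dots> = ennreal (g (real m))" using k1 by (simp add: inst_total)
      also have "\<dots> \<le> ennreal (\<delta> * real m)" using gm by (rule ennreal_leI)
      finally show ?thesis .
    qed
    define G where "G f \<omega> = cost (inst k m \<mu> f) (A \<omega> (inst k m \<mu> f))
        + ennreal c * migrated_size (inst k m \<mu> f) (A \<omega> (inst k m \<mu> f))" for f \<omega>
    have Gm: "G f \<in> borel_measurable M" for f
    proof -
      have [measurable]: "(\<lambda>\<omega>. cost (inst k m \<mu> f) (A \<omega> (inst k m \<mu> f))) \<in> borel_measurable M"
        "(\<lambda>\<omega>. migrated_size (inst k m \<mu> f) (A \<omega> (inst k m \<mu> f))) \<in> borel_measurable M"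
        using ra valid[of f] by (auto simp: randomized_algorithm_def)
      show ?thesis unfolding G_def by measurable
    qed
    define K0 where "K0 = real (card F) * real m * (1 + (\<mu> - 1) / 2)"
    have pw: "ennreal K0 \<le> (\<Sum>f\<in>F. G f \<omega>)" if \<omega>: "\<omega> \<in> space M" for \<omega>
    proof -
      define I0 where "I0 = inst k m \<mu> (\<lambda>_. 0)"
      define L where "L = A \<omega> I0 0"
      have onl: "online_nc (A \<omega>)" using ra \<omega> by (simp add: randomized_algorithm_def)
      have feas: "feasible (inst k m \<mu> f) (A \<omega> (inst k m \<mu> f))" for f
        using ra \<omega> valid[of f] by (simp add: randomized_algorithm_def)
      have meas: "(\<lambda>t. real (nbins (inst k m \<mu> f) (A \<omega> (inst k m \<mu> f)) t)) \<in> borel_measurable borel" for f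
        using ra \<omega> valid[of f] by (simp add: randomized_algorithm_def)
      have Lf: "A \<omega> (inst k m \<mu> f) 0 i = L i" if "i < m*k" for f i
      proof -
        have "view (inst k m \<mu> f) 0 = view I0 0" using mu by (simp add: I0_def view0)
        moreover have "length (view (inst k m \<mu> f) 0) = m*k" using mu by (simp add: view0)
        ultimately show ?thesis using onl valid[of f] valid[of "\<lambda>_. 0"] that
          unfolding online_nc_def L_def I0_def by metis
      qed
      have fib: "card {i. i < m*k \<and> L i = b} \<le> k" for b
        using fib_feas[OF feas[of "\<lambda>_. 0"] k1 mu, of b] by (simp add: L_def I0_def)
      have core': "real (card F) * real m / 2 \<le> (\<Sum>f\<in>F. real (card (L ` surv k m f)))"
        unfolding F_def by (rule core[OF k1 fib])
      have each: "ennreal (real m + (\<mu> - 1) * real (card (L ` surv k m f))) \<le> G f \<omega>" for f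
        unfolding G_def c_def
        by (rule cost_bound[where L=L, OF feas meas k1 mu Lf])
      have "ennreal K0 \<le> ennreal (\<Sum>f\<in>F. real m + (\<mu> - 1) * real (card (L ` surv k m f)))"
      proof (rule ennreal_leI)
        have "(\<Sum>f\<in>F. real m + (\<mu> - 1) * real (card (L ` surv k m f)))
            = real (card F) * real m + (\<mu> - 1) * (\<Sum>f\<in>F. real (card (L ` surv k m f)))"
          by (simp add: sum.distrib sum_distrib_left)
        moreover have "(\<mu> - 1) * (real (card F) * real m / 2) \<le> (\<mu> - 1) * (\<Sum>f\<in>F. real (card (L ` surv k m f)))"
          by (rule mult_left_mono[OF core']) (use mu in simp)
        ultimately show "K0 \<le> (\<Sum>f\<in>F. real m + (\<mu> - 1) * real (card (L ` surv k m f)))"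
          unfolding K0_def by (simp add: algebra_simps)
      qed
      also have "\<dots> = (\<Sum>f\<in>F. ennreal (real m + (\<mu> - 1) * real (card (L ` surv k m f))))"
        using mu by (intro sum_ennreal[symmetric]) simp
      also have "\<dots> \<le> (\<Sum>f\<in>F. G f \<omega>)" by (intro sum_mono each)
      finally show ?thesis .
    qed
    have "ennreal K0 = (\<integral>\<^sup>+ \<omega>. ennreal K0 \<partial>M)"
      using prob_space.emeasure_space_1[OF ps] by simp
    also have "\<dots> \<le> (\<integral>\<^sup>+ \<omega>. (\<Sum>f\<in>F. G f \<omega>) \<partial>M)" by (intro nn_integral_mono pw)
    also have "\<dots> = (\<Sum>f\<in>F. \<integral>\<^sup>+ \<omega>. G f \<omega> \<partial>M)" by (intro nn_integral_sum Gm)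
    also have "\<dots> \<le> (\<Sum>f\<in>F. ennreal (\<beta>' * (real m + (\<mu> - 1) * real r) + c * (\<delta> * real m)))"
    proof (rule sum_mono)
      fix f assume f: "f \<in> F"
      have m1: "(\<lambda>\<omega>. cost (inst k m \<mu> f) (A \<omega> (inst k m \<mu> f))) \<in> borel_measurable M"
        and m2: "(\<lambda>\<omega>. migrated_size (inst k m \<mu> f) (A \<omega> (inst k m \<mu> f))) \<in> borel_measurable M"
        using ra valid[of f] by (auto simp: randomized_algorithm_def)
      have "(\<integral>\<^sup>+ \<omega>. G f \<omega> \<partial>M) = exp_cost M A (inst k m \<mu> f) + ennreal c * exp_migrated M A (inst k m \<mu> f)"
        unfolding G_def exp_cost_def exp_migrated_def
        using m1 m2 by (simp add: nn_integral_add nn_integral_cmult measurable_compose)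
      also have "\<dots> \<le> ennreal (\<beta>' * (real m + (\<mu> - 1) * real r)) + ennreal c * ennreal (\<delta> * real m)"
        by (intro add_mono mult_left_mono ec[OF f] em) auto
      also have "\<dots> = ennreal (\<beta>' * (real m + (\<mu> - 1) * real r) + c * (\<delta> * real m))"
      proof -
        have n1: "0 \<le> \<beta>' * (real m + (\<mu> - 1) * real r)" using b0 mu by simp
        have n2: "0 \<le> c" using a0 by (simp add: c_def)
        have n3: "0 \<le> \<delta> * real m" using dpos by simp
        have "ennreal (\<beta>' * (real m + (\<mu> - 1) * real r) + c * (\<delta> * real m))
            = ennreal (\<beta>' * (real m + (\<mu> - 1) * real r)) + ennreal (c * (\<delta> * real m))"
          by (rule ennreal_plus[OF n1 mult_nonneg_nonneg[OF n2 n3]])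
        also have "ennreal (c * (\<delta> * real m)) = ennreal c * ennreal (\<delta> * real m)"
          by (rule ennreal_mult[OF n2 n3])
        finally show ?thesis by simp
      qed
      finally show "(\<integral>\<^sup>+ \<omega>. G f \<omega> \<partial>M) \<le> ennreal (\<beta>' * (real m + (\<mu> - 1) * real r) + c * (\<delta> * real m))" .
    qed
    also have "\<dots> = ennreal (real (card F) * (\<beta>' * (real m + (\<mu> - 1) * real r) + c * (\<delta> * real m)))"
    proof -
      define X where "X = \<beta>' * (real m + (\<mu> - 1) * real r) + c * (\<delta> * real m)"
      have X0: "0 \<le> X" using b0 a0 dpos mu unfolding X_def c_def
        by (intro add_nonneg_nonneg mult_nonneg_nonneg) auto
      have "(\<Sum>f\<in>F. ennreal X) = ennreal (\<Sum>f\<in>F. X)" by (rule sum_ennreal) (rule X0)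
      also have "(\<Sum>f\<in>F. X) = real (card F) * X" by simp
      finally show ?thesis unfolding X_def .
    qed
    finally have "K0 \<le> real (card F) * (\<beta>' * (real m + (\<mu> - 1) * real r) + c * (\<delta> * real m))"
      using b0 a0 dpos mu by (subst (asm) ennreal_le_iff) (auto intro!: mult_nonneg_nonneg add_nonneg_nonneg simp: c_def)
    then have le: "real m * (1 + (\<mu> - 1) / 2) \<le> \<beta>' * (real m + (\<mu> - 1) * real r) + (\<mu> - 1) * real k * (\<delta> * real m)"
      using cFpos unfolding K0_def c_def by (simp add: mult.assoc)
    show False
      by (rule final_arith[OF b0 b1 mu kb k2 cd _ m0 le]) (simp add: m_def)
  qed
qed


end
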